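(* If the graph $G=([k],E)$ is realisable in $\mathbb{R}^d$ with profile $\boldsymbol\lambda$ and $\lambda_i\ge 2$ for every $i\in[k]$, then $\zeta(G,\boldsymbol\lambda)\le\frac58 d+\frac18 k$.
   Context: A sphere of dimension $\ell$ in $\mathbb{R}^d$ ($0\le\ell\le d-1$) is the set of points of an $(\ell+1)$-dimensional affine subspace at a fixed positive distance from a fixed point of that subspace. For finite sets $P_1,\dots,P_k\subset\mathbb{R}^d$, the profile of $(P_1,\dots,P_k)$ is $\boldsymbol\lambda=(\lambda_1,\dots,\lambda_k)$, where $\lambda_i=0$ if $|P_i|\le 3$, and otherwise $\lambda_i$ is the smallest $\ell$ such that some sphere of dimension $\ell$ contains $P_i$, with $\lambda_i=d$ if no sphere contains $P_i$. A graph $G=([k],E)$ is compatible with $(P_1,\dots,P_k)$ if $\|p-p'\|=1$ for every edge $\{i,j\}\in E$ and all $p\in P_i$, $p'\in P_j$. $G$ is realisable in $\mathbb{R}^d$ with profile $\boldsymbol\lambda$ if there exist finite sets $P_1,\dots,P_k\subset\mathbb{R}^d$ with profile $\boldsymbol\lambda$ that are compatible with $G$. For $i\in[k]$ let $V_i=\{j\in[k]\setminus\{i\}:\{i,j\}\notin E\}$. $\zeta(G,\boldsymbol\lambda)$ denotes the optimum value of the linear program: minimize $\sum_{i\in[k]}\lambda_ix_i$ over $\mathbf{x}\in\mathbb{R}^k$ subject to $x_i\ge 0$ and $\lambda_ix_i+\sum_{j\in V_i}x_j\ge 1$ for all $i\in[k]$. *)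

theory Defs
  imports "HOL-Analysis.Analysis"
begin

definition is_sphere :: "nat \<Rightarrow> 'a::euclidean_space set \<Rightarrow> bool" where
  "is_sphere l S \<longleftrightarrow> (\<exists>A c r. affine A \<and> aff_dim A = int l + 1 \<and> c \<in> A \<and> r > 0 \<and>
      S = {x \<in> A. dist x c = r})"

definition profile_entry :: "'a::euclidean_space set \<Rightarrow> nat" where
  "profile_entry P =
     (if card P \<le> 3 then 0
      else if (\<exists>l S. is_sphere l S \<and> P \<subseteq> (S :: 'a set))
           then (LEAST l. \<exists>S. is_sphere l S \<and> P \<subseteq> (S :: 'a set))
      else DIM('a))"

definition is_graph_on :: "nat \<Rightarrow> nat set set \<Rightarrow> bool" where
  "is_graph_on k E \<longleftrightarrow> (\<forall>e\<in>E. \<exists>i j. i \<in> {1..k} \<and> j \<in> {1..k} \<and> i \<noteq> j \<and> e = {i, j})"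

definition compatible :: "nat \<Rightarrow> nat set set \<Rightarrow> (nat \<Rightarrow> 'a::euclidean_space set) \<Rightarrow> bool" where
  "compatible k E P \<longleftrightarrow>
     (\<forall>i\<in>{1..k}. \<forall>j\<in>{1..k}. {i, j} \<in> E \<longrightarrow> (\<forall>p\<in>P i. \<forall>p'\<in>P j. dist p p' = 1))"

definition realisable :: "'a::euclidean_space itself \<Rightarrow> nat \<Rightarrow> nat set set \<Rightarrow> (nat \<Rightarrow> nat) \<Rightarrow> bool" where
  "realisable _ k E lam \<longleftrightarrow>
     (\<exists>P :: nat \<Rightarrow> 'a set. (\<forall>i\<in>{1..k}. finite (P i) \<and> profile_entry (P i) = lam i)
        \<and> compatible k E P)"

definition nonnbrs :: "nat \<Rightarrow> nat set set \<Rightarrow> nat \<Rightarrow> nat set" where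
  "nonnbrs k E i = {j \<in> {1..k}. j \<noteq> i \<and> {i, j} \<notin> E}"

definition lp_feasible :: "nat \<Rightarrow> nat set set \<Rightarrow> (nat \<Rightarrow> nat) \<Rightarrow> (nat \<Rightarrow> real) \<Rightarrow> bool" where
  "lp_feasible k E lam x \<longleftrightarrow>
     (\<forall>i\<in>{1..k}. x i \<ge> 0 \<and> real (lam i) * x i + (\<Sum>j\<in>nonnbrs k E i. x j) \<ge> 1)"

definition zeta :: "nat \<Rightarrow> nat set set \<Rightarrow> (nat \<Rightarrow> nat) \<Rightarrow> real" where
  "zeta k E lam = Inf {\<Sum>i\<in>{1..k}. real (lam i) * x i | x. lp_feasible k E lam x}"

end

theory Submission
  imports Defs
begin

definition dotI :: "'i set \<Rightarrow> ('i \<Rightarrow> real) \<Rightarrow> ('i \<Rightarrow> real) \<Rightarrow> real" where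
  "dotI I u v = (\<Sum>i\<in>I. u i * v i)"

definition in_cone :: "'i set \<Rightarrow> 'j set \<Rightarrow> ('j \<Rightarrow> 'i \<Rightarrow> real) \<Rightarrow> ('i \<Rightarrow> real) \<Rightarrow> bool" where
  "in_cone I J g b \<longleftrightarrow> (\<exists>c. (\<forall>j\<in>J. 0 \<le> c j) \<and> (\<forall>i\<in>I. b i = (\<Sum>j\<in>J. c j * g j i)))"

lemma dotI_lin: "dotI I y (\<lambda>i. a * u i + b * v i) = a * dotI I y u + b * dotI I y v"
  by (simp add: dotI_def sum.distrib sum_distrib_left algebra_simps)

lemma dotI_lin2: "dotI I (\<lambda>i. a * u i + b * v i) w = a * dotI I u w + b * dotI I v w"
  by (simp add: dotI_def sum.distrib sum_distrib_left algebra_simps)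

lemma farkas_aux:
  assumes "finite J" and finI: "finite I"
  shows "\<forall>g b. \<not> in_cone I J g b \<longrightarrow> (\<exists>y. (\<forall>j\<in>J. dotI I y (g j) \<ge> 0) \<and> dotI I y b < 0)"
  using assms
proof (induction J rule: finite_induct)
  case empty
  show ?case
  proof (intro allI impI)
    fix g :: "'a \<Rightarrow> 'b \<Rightarrow> real" and b
    assume nc: "\<not> in_cone I {} g b"
    then obtain i where i: "i \<in> I" "b i \<noteq> 0" by (auto simp: in_cone_def)
    have "dotI I (\<lambda>i. - b i) b < 0"
    proof -
      have "dotI I (\<lambda>i. - b i) b = - (\<Sum>i\<in>I. (b i)^2)"
        by (simp add: dotI_def power2_eq_square sum_negf)
      moreover have "(\<Sum>i\<in>I. (b i)^2) > 0"
      proof -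
        have fin: "finite I" by (rule finI)
        have "(b i)^2 \<le> (\<Sum>i\<in>I. (b i)^2)"
          using i fin by (intro member_le_sum) auto
        moreover have "(b i)^2 > 0" using i by simp
        ultimately show ?thesis by linarith
      qed
      ultimately show ?thesis by linarith
    qed
    then show "\<exists>y. (\<forall>j\<in>{}. dotI I y (g j) \<ge> 0) \<and> dotI I y b < 0" by blast
  qed
next
  case (insert a J)
  show ?case
  proof (intro allI impI)
    fix g :: "'a \<Rightarrow> 'b \<Rightarrow> real" and b
    assume nc: "\<not> in_cone I (insert a J) g b"
    have nc1: "\<not> in_cone I J g b"
    proof
      assume "in_cone I J g b"
      then obtain c where c: "\<forall>j\<in>J. 0 \<le> c j" "\<forall>i\<in>I. b i = (\<Sum>j\<in>J. c j * g j i)"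
        by (auto simp: in_cone_def)
      let ?c = "c(a := 0)"
      have "\<forall>j\<in>insert a J. 0 \<le> ?c j" using c by auto
      moreover have "\<forall>i\<in>I. b i = (\<Sum>j\<in>insert a J. ?c j * g j i)"
      proof
        fix i assume "i \<in> I"
        have "(\<Sum>j\<in>insert a J. ?c j * g j i) = (\<Sum>j\<in>J. ?c j * g j i)"
          using insert by simp
        also have "\<dots> = (\<Sum>j\<in>J. c j * g j i)"
          using insert by (intro sum.cong) auto
        finally show "b i = (\<Sum>j\<in>insert a J. ?c j * g j i)" using c \<open>i\<in>I\<close> by simp
      qed
      ultimately have "in_cone I (insert a J) g b" unfolding in_cone_def by blast
        then show False using nc by simp
    qed
    from insert.IH[OF finI] nc1 obtain y where y: "\<forall>j\<in>J. dotI I y (g j) \<ge> 0" "dotI I y b < 0" by blast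
    show "\<exists>y. (\<forall>j\<in>insert a J. dotI I y (g j) \<ge> 0) \<and> dotI I y b < 0"
    proof (cases "dotI I y (g a) \<ge> 0")
      case True
      then show ?thesis using y by auto
    next
      case False
      define ya where "ya = dotI I y (g a)"
      have ya: "ya < 0" using False ya_def by simp
      define g' where "g' = (\<lambda>j i. ya * g j i + (- dotI I y (g j)) * g a i)"
      define b' where "b' = (\<lambda>i. ya * b i + (- dotI I y b) * g a i)"
      have nc2: "\<not> in_cone I J g' b'"
      proof
        assume "in_cone I J g' b'"
        then obtain c where c: "\<forall>j\<in>J. 0 \<le> c j" "\<forall>i\<in>I. b' i = (\<Sum>j\<in>J. c j * g' j i)"
          by (auto simp: in_cone_def)
        define ca where "ca = (dotI I y b - (\<Sum>j\<in>J. c j * dotI I y (g j))) / ya"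
        have "(\<Sum>j\<in>J. c j * dotI I y (g j)) \<ge> 0"
          using c y by (intro sum_nonneg) auto
        then have "dotI I y b - (\<Sum>j\<in>J. c j * dotI I y (g j)) < 0" using y by linarith
        then have ca0: "ca \<ge> 0" unfolding ca_def using ya
          by (simp add: divide_nonpos_neg)
        let ?c = "c(a := ca)"
        have "\<forall>j\<in>insert a J. 0 \<le> ?c j" using c ca0 by auto
        moreover have "\<forall>i\<in>I. b i = (\<Sum>j\<in>insert a J. ?c j * g j i)"
        proof
          fix i assume iI: "i \<in> I"
          have s1: "(\<Sum>j\<in>insert a J. ?c j * g j i) = ca * g a i + (\<Sum>j\<in>J. c j * g j i)"
          proof -
            have "(\<Sum>j\<in>insert a J. ?c j * g j i) = ?c a * g a i + (\<Sum>j\<in>J. ?c j * g j i)"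
              using insert by simp
            also have "(\<Sum>j\<in>J. ?c j * g j i) = (\<Sum>j\<in>J. c j * g j i)"
              using insert by (intro sum.cong) auto
            finally show ?thesis by simp
          qed
          have "ya * b i - dotI I y b * g a i = (\<Sum>j\<in>J. c j * (ya * g j i - dotI I y (g j) * g a i))"
            using c(2) iI by (simp add: b'_def g'_def)
          also have "\<dots> = ya * (\<Sum>j\<in>J. c j * g j i) - (\<Sum>j\<in>J. c j * dotI I y (g j)) * g a i"
            by (simp add: algebra_simps sum_subtractf sum_distrib_left sum_distrib_right)
          finally have eq: "ya * b i = ya * (\<Sum>j\<in>J. c j * g j i) + (dotI I y b - (\<Sum>j\<in>J. c j * dotI I y (g j))) * g a i"
            by (simp add: algebra_simps)
          have "(dotI I y b - (\<Sum>j\<in>J. c j * dotI I y (g j))) = ya * ca"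
            using ya unfolding ca_def by simp
          with eq have "ya * b i = ya * ((\<Sum>j\<in>J. c j * g j i) + ca * g a i)"
            by (simp add: algebra_simps)
          then have "b i = (\<Sum>j\<in>J. c j * g j i) + ca * g a i" using ya by simp
          then show "b i = (\<Sum>j\<in>insert a J. ?c j * g j i)" using s1 by simp
        qed
        ultimately have "in_cone I (insert a J) g b" unfolding in_cone_def by blast
        then show False using nc by simp
      qed
      from insert.IH[OF finI] nc2 obtain y' where y': "\<forall>j\<in>J. dotI I y' (g' j) \<ge> 0" "dotI I y' b' < 0" by blast
      define z where "z = (\<lambda>i. ya * y' i + (- dotI I y' (g a)) * y i)"
      have zg: "dotI I z (g j) = dotI I y' (g' j)" for j
        unfolding z_def g'_def dotI_lin dotI_lin2 by (simp add: algebra_simps)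
      have zb: "dotI I z b = dotI I y' b'"
        unfolding z_def b'_def dotI_lin dotI_lin2 by (simp add: algebra_simps)
      have "dotI I z (g a) = 0"
        unfolding z_def dotI_lin2 ya_def by (simp add: algebra_simps)
      then have "\<forall>j\<in>insert a J. dotI I z (g j) \<ge> 0" using zg y' by auto
      moreover have "dotI I z b < 0" using zb y' by simp
      ultimately show ?thesis by blast
    qed
  qed
qed

lemma poly_ineq: fixes L r :: real assumes "L \<ge> 2" "r \<ge> 0"
  shows "8*L*(1+r) \<le> (5*L+1+r)*(L+r)"
proof -
  have "(5*L+1+r)*(L+r) - 8*L*(1+r) = (r - L)^2 + L*(4*L - 7) + r"
    by (simp add: power2_eq_square algebra_simps)
  moreover have "L*(4*L - 7) \<ge> 0" using assms by simp
  ultimately show ?thesis using assms by (smt (verit) zero_le_power2)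
qed

lemma key_ineq: fixes L r yv s :: real
  assumes L: "L \<ge> 2" and r: "r \<ge> 0" and yv: "yv \<ge> 0" and c1: "L*yv + s \<le> L" and c2: "s \<le> r*yv"
  shows "yv + s \<le> (5*L + 1 + r)/8"
proof -
  have Lr: "L + r > 0" using L r by simp
  have P: "8*L*(1+r) \<le> (5*L+1+r)*(L+r)" using poly_ineq L r by simp
  show ?thesis
  proof (cases "yv*(L+r) \<le> L")
    case True
    have "8*((1+r)*yv)*(L+r) = 8*(1+r)*(yv*(L+r))" by (simp add: algebra_simps)
    also have "\<dots> \<le> 8*(1+r)*L" using True r by (intro mult_left_mono) auto
    also have "\<dots> \<le> (5*L+1+r)*(L+r)" using P by (simp add: algebra_simps)
    finally have "8*((1+r)*yv) \<le> 5*L+1+r" using Lr by simp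
    moreover have "yv + s \<le> (1+r)*yv" using c2 by (simp add: algebra_simps)
    ultimately show ?thesis by simp
  next
    case False
    have "8*(L - (L-1)*yv)*(L+r) = 8*L*(L+r) - 8*(L-1)*(yv*(L+r))" by (simp add: algebra_simps)
    also have "\<dots> \<le> 8*L*(L+r) - 8*(L-1)*L" using False L by (intro diff_left_mono mult_left_mono) auto
    also have "\<dots> = 8*L*(1+r)" by (simp add: algebra_simps)
    also have "\<dots> \<le> (5*L+1+r)*(L+r)" using P .
    finally have "8*(L - (L-1)*yv) \<le> 5*L+1+r" using Lr by simp
    moreover have "yv + s \<le> L - (L-1)*yv" using c1 by (simp add: algebra_simps)
    ultimately show ?thesis by simp
  qed
qed

definition cliq :: "nat set set \<Rightarrow> nat set \<Rightarrow> bool" where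
  "cliq E C \<longleftrightarrow> (\<forall>i\<in>C. \<forall>j\<in>C. i \<noteq> j \<longrightarrow> {i,j} \<in> E)"

lemma dual_bound:
  fixes E :: "nat set set" and lam :: "nat \<Rightarrow> nat" and y :: "nat \<Rightarrow> real"
  assumes "finite S" "S \<noteq> {}"
    and "\<forall>i\<in>S. lam i \<ge> 2" "\<forall>i\<in>S. y i \<ge> 0"
    and "\<forall>i\<in>S. real (lam i) * y i + (\<Sum>j\<in>{j\<in>S. j \<noteq> i \<and> {i,j} \<notin> E}. y j) \<le> real (lam i)"
    and "\<forall>C. C \<subseteq> S \<longrightarrow> C \<noteq> {} \<longrightarrow> cliq E C \<longrightarrow> (\<Sum>i\<in>C. real (lam i) + 1) \<le> D + 1"
  shows "(\<Sum>i\<in>S. y i) \<le> (5*D + real (card S))/8"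
  using assms
proof (induction "card S" arbitrary: S D rule: less_induct)
  case less
  note fin = less.prems(1) and ne = less.prems(2) and lam2 = less.prems(3)
    and ynn = less.prems(4) and cons = less.prems(5) and cl = less.prems(6)
  obtain v where v: "v \<in> S" "\<forall>j\<in>S. y j \<le> y v"
  proof -
    have "Max (y ` S) \<in> y ` S" using fin ne by simp
    then obtain v where "v \<in> S" "y v = Max (y ` S)" by auto
    moreover have "\<forall>j\<in>S. y j \<le> Max (y ` S)" using fin by simp
    ultimately show ?thesis using that by auto
  qed
  define R where "R = {j\<in>S. j \<noteq> v \<and> {v,j} \<notin> E}"
  define T where "T = {j\<in>S. j \<noteq> v \<and> {v,j} \<in> E}"
  have finR: "finite R" and finT: "finite T" using fin by (auto simp: R_def T_def)
  have Sdec: "S = insert v (R \<union> T)" using v(1) by (auto simp: R_def T_def)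
  have disj: "R \<inter> T = {}" "v \<notin> R" "v \<notin> T" by (auto simp: R_def T_def)
  have sumS: "(\<Sum>i\<in>S. y i) = y v + (\<Sum>i\<in>R. y i) + (\<Sum>i\<in>T. y i)"
    using Sdec disj finR finT by (simp add: sum.union_disjoint)
  have cardS: "card S = 1 + card R + card T"
    using Sdec disj finR finT by (simp add: card_Un_disjoint)
  have c1: "real (lam v) * y v + (\<Sum>i\<in>R. y i) \<le> real (lam v)"
    using cons v(1) unfolding R_def by auto
  have c2: "(\<Sum>i\<in>R. y i) \<le> real (card R) * y v"
  proof -
    have "(\<Sum>i\<in>R. y i) \<le> (\<Sum>i\<in>R. y v)" using v(2) by (intro sum_mono) (auto simp: R_def)
    then show ?thesis by simp
  qed
  have key: "y v + (\<Sum>i\<in>R. y i) \<le> (5 * real (lam v) + 1 + real (card R))/8"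
    using key_ineq[of "real (lam v)" "real (card R)" "y v" "\<Sum>i\<in>R. y i"] lam2 v(1) ynn c1 c2 by auto
  have clv: "real (lam v) + 1 \<le> D + 1"
  proof -
    have "cliq E {v}" by (simp add: cliq_def)
    then show ?thesis using cl v(1) by auto
  qed
  show ?case
  proof (cases "T = {}")
    case True
    then show ?thesis using sumS cardS key clv by simp
  next
    case False
    have lt: "card T < card S" using cardS by simp
    have IH: "(\<Sum>i\<in>T. y i) \<le> (5*(D - real (lam v) - 1) + real (card T))/8"
    proof (rule less.hyps[OF lt finT False])
      show "\<forall>i\<in>T. lam i \<ge> 2" using lam2 by (auto simp: T_def)
      show "\<forall>i\<in>T. y i \<ge> 0" using ynn by (auto simp: T_def)
      show "\<forall>i\<in>T. real (lam i) * y i + (\<Sum>j\<in>{j\<in>T. j \<noteq> i \<and> {i,j} \<notin> E}. y j) \<le> real (lam i)"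
      proof
        fix i assume iT: "i \<in> T"
        have "(\<Sum>j\<in>{j\<in>T. j \<noteq> i \<and> {i,j} \<notin> E}. y j) \<le> (\<Sum>j\<in>{j\<in>S. j \<noteq> i \<and> {i,j} \<notin> E}. y j)"
          using fin ynn by (intro sum_mono2) (auto simp: T_def)
        moreover have "i \<in> S" using iT by (auto simp: T_def)
        ultimately show "real (lam i) * y i + (\<Sum>j\<in>{j\<in>T. j \<noteq> i \<and> {i,j} \<notin> E}. y j) \<le> real (lam i)"
          using cons by fastforce
      qed
      show "\<forall>C. C \<subseteq> T \<longrightarrow> C \<noteq> {} \<longrightarrow> cliq E C \<longrightarrow> (\<Sum>i\<in>C. real (lam i) + 1) \<le> D - real (lam v) - 1 + 1"
      proof (intro allI impI)
        fix C assume C: "C \<subseteq> T" "C \<noteq> {}" "cliq E C"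
        have "cliq E (insert v C)"
          using C unfolding cliq_def T_def by (auto simp: insert_commute)
        moreover have "insert v C \<subseteq> S" using C v(1) by (auto simp: T_def)
        ultimately have "(\<Sum>i\<in>insert v C. real (lam i) + 1) \<le> D + 1" using cl by blast
        moreover have "finite C" using C finT finite_subset by blast
        moreover have "v \<notin> C" using C disj by auto
        ultimately show "(\<Sum>i\<in>C. real (lam i) + 1) \<le> D - real (lam v) - 1 + 1" by simp
      qed
    qed
    show ?thesis using sumS cardS key IH by simp
  qed
qed

lemma profile_entry_le_DIM:
  fixes P :: "'a::euclidean_space set"
  shows "profile_entry P \<le> DIM('a)"
proof -
  { assume ex: "\<exists>l S. is_sphere l S \<and> P \<subseteq> (S :: 'a set)"
    then obtain l S where lS: "is_sphere l S" "P \<subseteq> S" by blast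
    from lS(1) have "\<exists>A c r. affine A \<and> aff_dim A = int l + 1 \<and> c \<in> A \<and> r > 0 \<and> S = {x \<in> A. dist x c = r}"
      by (simp only: is_sphere_def)
    then obtain A c r where A: "affine A" "aff_dim A = int l + 1" "c \<in> A" "r > 0" "S = {x \<in> A. dist x c = r}"
      by blast
    have "aff_dim A \<le> int DIM('a)" by (rule aff_dim_le_DIM)
    then have "l < DIM('a)" using A by simp
    moreover have "\<exists>S. is_sphere l S \<and> P \<subseteq> (S :: 'a set)" using lS by blast
    then have "(LEAST l. \<exists>S. is_sphere l S \<and> P \<subseteq> (S :: 'a set)) \<le> l"
      by (rule Least_le)
    ultimately have "(LEAST l. \<exists>S. is_sphere l S \<and> P \<subseteq> (S :: 'a set)) \<le> DIM('a)" by simp }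
  note h = this
  show ?thesis
  proof (cases "card P \<le> 3")
    case True
    then show ?thesis unfolding profile_entry_def by simp
  next
    case False
    show ?thesis
    proof (cases "\<exists>l S. is_sphere l S \<and> P \<subseteq> (S :: 'a set)")
      case True
      then have "profile_entry P = (LEAST l. \<exists>S. is_sphere l S \<and> P \<subseteq> (S :: 'a set))"
        using False unfolding profile_entry_def by (simp only: if_False if_True)
      then show ?thesis using h True by simp
    next
      case F2: False
      then have "profile_entry P = DIM('a)"
        using False unfolding profile_entry_def by (simp only: if_False if_True)
      then show ?thesis by simp
    qed
  qed
qed

lemma polar:
  fixes p q p' q' :: "'a::real_inner"
  shows "2 * inner (p - q) (p' - q') = (norm (p - q'))^2 + (norm (q - p'))^2 - (norm (p - p'))^2 - (norm (q - q'))^2"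
  by (simp add: power2_norm_eq_inner inner_diff_left inner_diff_right inner_commute algebra_simps)

lemma sphere_dim:
  fixes P :: "'a::euclidean_space set"
  assumes finP: "finite P" and cardP: "card P > 3" and a: "a \<in> P"
    and pp: "\<forall>p\<in>P. dist p p' = 1"
  shows "profile_entry P + 1 \<le> dim ((+) (- a) ` P)"
proof -
  define Q where "Q = (+) (- a) ` P"
  obtain yy zz where yy: "yy \<in> span Q" and zz: "\<And>w. w \<in> span Q \<Longrightarrow> orthogonal zz w"
    and dec: "p' - a = yy + zz"
    using orthogonal_subspace_decomp_exists[of Q "p' - a"] by blast
  define c where "c = a + yy"
  have ahP: "a \<in> affine hull P" using a by (simp add: hull_inc)
  have A: "affine hull P = (\<lambda>x. a + x) ` span Q"
    unfolding Q_def using affine_hull_span_gen[OF ahP] by simp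
  have cA: "c \<in> affine hull P" unfolding A c_def using yy by blast
  have xc: "x - c \<in> span Q" if "x \<in> P" for x
  proof -
    have "x - a \<in> Q" unfolding Q_def using that by force
    then have "x - a \<in> span Q" by (rule span_base)
    then have "(x - a) - yy \<in> span Q" using yy by (rule span_diff)
    then show ?thesis by (simp add: c_def algebra_simps)
  qed
  have pc: "p' - c = zz" using dec by (simp add: c_def algebra_simps)
  have nx: "(norm (x - c))^2 = 1 - (norm zz)^2" if "x \<in> P" for x
  proof -
    have e: "x - p' = (x - c) - zz" using pc by (simp add: algebra_simps)
    have gen: "(norm (u - w))^2 = (norm u)^2 + (norm w)^2 - 2 * inner u w" for u w :: 'a
      by (simp add: power2_norm_eq_inner inner_diff_left inner_diff_right inner_commute algebra_simps)
    have "(norm (x - p'))^2 = (norm (x - c))^2 + (norm zz)^2 - 2 * inner (x - c) zz"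
      unfolding e by (rule gen)
    moreover have "inner (x - c) zz = 0" using zz[OF xc[OF that]] by (simp add: orthogonal_def inner_commute)
    moreover have "norm (x - p') = 1" using pp that by (simp add: dist_norm)
    ultimately show ?thesis by simp
  qed
  obtain x1 x2 where x12: "x1 \<in> P" "x2 \<in> P" "x1 \<noteq> x2"
  proof -
    have "\<not> (\<forall>x\<in>P. \<forall>y\<in>P. x = y)"
    proof
      assume "\<forall>x\<in>P. \<forall>y\<in>P. x = y"
      then have "P \<subseteq> {a}" using a by blast
      then have "card P \<le> card {a}" by (intro card_mono) auto
      then have "card P \<le> 1" by simp
      then show False using cardP by simp
    qed
    then show ?thesis using that by blast
  qed
  have z1: "(norm zz)^2 < 1"
  proof (rule ccontr)
    assume "\<not> (norm zz)^2 < 1"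
    then have h: "(norm zz)^2 \<ge> 1" by linarith
    have "(norm (x1 - c))^2 = 1 - (norm zz)^2" by (rule nx[OF x12(1)])
    moreover have "(norm (x1 - c))^2 \<ge> 0" by (rule zero_le_power2)
    ultimately have "(norm (x1 - c))^2 = 0" using h by linarith
    then have e1: "x1 = c" by simp
    have "(norm (x2 - c))^2 = 1 - (norm zz)^2" by (rule nx[OF x12(2)])
    moreover have "(norm (x2 - c))^2 \<ge> 0" by (rule zero_le_power2)
    ultimately have "(norm (x2 - c))^2 = 0" using h by linarith
    then have "x2 = c" by simp
    then show False using x12 e1 by simp
  qed
  define r where "r = sqrt (1 - (norm zz)^2)"
  have r0: "r > 0" using z1 by (simp add: r_def)
  define S where "S = {x \<in> affine hull P. dist x c = r}"
  have PS: "P \<subseteq> S"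
  proof
    fix x assume x: "x \<in> P"
    have "dist x c = norm (x - c)" by (simp add: dist_norm)
    also have "\<dots> = sqrt ((norm (x - c))^2)" by simp
    also have "\<dots> = r" using nx[OF x] by (simp add: r_def)
    finally show "x \<in> S" using x by (simp add: S_def hull_inc)
  qed
  have dQ: "dim Q \<ge> 1"
  proof (rule ccontr)
    assume "\<not> dim Q \<ge> 1"
    then have "dim Q = 0" by linarith
    then have "Q \<subseteq> {0}" using dim_eq_0 by blast
    moreover have "-a + x1 \<in> Q" "-a + x2 \<in> Q" unfolding Q_def using x12 by auto
    ultimately have "-a + x1 = 0" "-a + x2 = 0" by auto
    then have "x1 = x2" by (simp add: algebra_simps)
    then show False using x12 by simp
  qed
  have adA: "aff_dim (affine hull P) = int (dim Q)"
    using aff_dim_eq_dim[OF ahP] by (simp add: Q_def)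
  have e1: "int (dim Q - 1) + 1 = int (dim Q)" using dQ by simp
  have sph: "is_sphere (dim Q - 1) S"
  proof -
    have "affine (affine hull P) \<and> aff_dim (affine hull P) = int (dim Q - 1) + 1 \<and> c \<in> affine hull P \<and> r > 0
       \<and> S = {x \<in> affine hull P. dist x c = r}"
      using adA e1 cA r0 by (simp add: S_def)
    then show ?thesis unfolding is_sphere_def by blast
  qed
  have ex2: "\<exists>S. is_sphere (dim Q - 1) S \<and> P \<subseteq> (S :: 'a set)" using sph PS by blast
  have ex: "\<exists>l S. is_sphere l S \<and> P \<subseteq> (S :: 'a set)" using ex2 by blast
  have nc: "\<not> card P \<le> 3" using cardP by simp
  have "profile_entry P = (LEAST l. \<exists>S. is_sphere l S \<and> P \<subseteq> (S :: 'a set))"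
    unfolding profile_entry_def using nc ex by (simp only: if_False if_True)
  also have "\<dots> \<le> dim Q - 1"
    using ex2 by (rule Least_le)
  finally have "profile_entry P \<le> dim Q - 1" .
  then have "profile_entry P + 1 \<le> dim Q" using dQ by linarith
  then show ?thesis by (simp only: Q_def)
qed

lemma clique_dim:
  fixes P :: "nat \<Rightarrow> 'a::euclidean_space set" and a :: "nat \<Rightarrow> 'a"
  assumes finC: "finite C"
    and orth: "\<And>i j u w. i \<in> C \<Longrightarrow> j \<in> C \<Longrightarrow> i \<noteq> j \<Longrightarrow> u \<in> (+) (- a i) ` P i \<Longrightarrow> w \<in> (+) (- a j) ` P j \<Longrightarrow> inner u w = 0"
  shows "(\<Sum>i\<in>C. dim ((+) (- a i) ` P i)) \<le> DIM('a)"
proof -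
  define Q where "Q = (\<lambda>i. (+) (- a i) ` P i)"
  have "\<forall>i. \<exists>B. independent B \<and> B \<subseteq> span (Q i) \<and> card B = dim (Q i) \<and> pairwise orthogonal B"
    using orthogonal_basis_exists by blast
  then obtain B where B: "\<And>i. independent (B i)" "\<And>i. B i \<subseteq> span (Q i)" "\<And>i. card (B i) = dim (Q i)"
    "\<And>i. pairwise orthogonal (B i)"
    by metis
  have finB: "finite (B i)" for i using independent_bound B(1) by blast
  have nz: "0 \<notin> B i" for i using B(1) dependent_zero by blast
  have cross: "orthogonal u w" if "i \<in> C" "j \<in> C" "i \<noteq> j" "u \<in> span (Q i)" "w \<in> span (Q j)" for i j u w
  proof -
    have "orthogonal w' u" if "w' \<in> Q j" for w'
    proof -
      have "orthogonal u w'" if u': "u \<in> span (Q i)" for u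
      proof -
        have "orthogonal w' u''" if "u'' \<in> Q i" for u''
          using orth[OF \<open>i \<in> C\<close> \<open>j \<in> C\<close> \<open>i \<noteq> j\<close>, of u'' w'] that \<open>w' \<in> Q j\<close>
          by (simp add: Q_def orthogonal_def inner_commute)
        then have "orthogonal w' u" using orthogonal_to_span[OF u'] by blast
        then show ?thesis by (simp add: orthogonal_commute)
      qed
      then show ?thesis using \<open>u \<in> span (Q i)\<close> by (simp add: orthogonal_commute)
    qed
    then have "orthogonal u w" using orthogonal_to_span[OF \<open>w \<in> span (Q j)\<close>] orthogonal_commute by blast
    then show ?thesis .
  qed
  define U where "U = (\<Union>i\<in>C. B i)"
  have disjB: "\<forall>i\<in>C. \<forall>j\<in>C. i \<noteq> j \<longrightarrow> B i \<inter> B j = {}"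
  proof (intro ballI impI)
    fix i j assume ij: "i \<in> C" "j \<in> C" "i \<noteq> j"
    show "B i \<inter> B j = {}"
    proof (rule ccontr)
      assume "B i \<inter> B j \<noteq> {}"
      then obtain x where x: "x \<in> B i" "x \<in> B j" by blast
      then have "orthogonal x x" using cross[OF ij] B(2) by blast
      then have "x = 0" by (simp add: orthogonal_self)
      then show False using x nz by blast
    qed
  qed
  have po: "pairwise orthogonal U"
    unfolding pairwise_def U_def
  proof (intro ballI impI)
    fix x y assume "x \<in> (\<Union>i\<in>C. B i)" "y \<in> (\<Union>i\<in>C. B i)" "x \<noteq> y"
    then obtain i j where ij: "i \<in> C" "j \<in> C" "x \<in> B i" "y \<in> B j" by blast
    show "orthogonal x y"
    proof (cases "i = j")
      case True
      then show ?thesis using B(4)[of i] ij \<open>x \<noteq> y\<close> unfolding pairwise_def by blast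
    next
      case False
      then show ?thesis using cross[OF ij(1,2) False] B(2) ij by blast
    qed
  qed
  have "0 \<notin> U" using nz by (auto simp: U_def)
  then have indU: "independent U" using po pairwise_orthogonal_independent by blast
  then have "card U \<le> DIM('a)" using independent_bound by blast
  moreover have "card U = (\<Sum>i\<in>C. card (B i))"
    unfolding U_def using finC finB disjB by (intro card_UN_disjoint) auto
  ultimately show ?thesis using B(3) by (simp add: Q_def)
qed


lemma card_gt3:
  assumes "profile_entry (P :: 'a::euclidean_space set) \<ge> 2"
  shows "card P > 3"
proof (rule ccontr)
  assume "\<not> card P > 3"
  then have "profile_entry P = 0" unfolding profile_entry_def by simp
  then show False using assms by simp
qed

lemma clique_weight:
  fixes P :: "nat \<Rightarrow> 'a::euclidean_space set"
  assumes comp: "compatible k E P"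
    and fin: "\<forall>i\<in>{1..k}. finite (P i) \<and> profile_entry (P i) = lam i"
    and lam2: "\<forall>i\<in>{1..k}. lam i \<ge> 2"
    and C: "C \<subseteq> {1..k}" "C \<noteq> {}" "cliq E C"
  shows "(\<Sum>i\<in>C. real (lam i) + 1) \<le> real DIM('a) + 1"
proof -
  have finC: "finite C" using C(1) finite_subset by blast
  have c3: "card (P i) > 3" if "i \<in> C" for i
    using card_gt3[of "P i"] fin lam2 C(1) that by auto
  have ne: "P i \<noteq> {}" if "i \<in> C" for i
    using c3[OF that] by (metis card.empty not_less_zero)
  show ?thesis
  proof (cases "\<exists>i. C = {i}")
    case True
    then obtain i where i: "C = {i}" by blast
    have "lam i = profile_entry (P i)" using fin C(1) i by auto
    also have "\<dots> \<le> DIM('a)" by (rule profile_entry_le_DIM)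
    finally show ?thesis using i by simp
  next
    case False
    have other: "\<exists>j\<in>C. j \<noteq> i" if "i \<in> C" for i
    proof (rule ccontr)
      assume "\<not> (\<exists>j\<in>C. j \<noteq> i)"
      then have "C = {i}" using that by blast
      then show False using False by blast
    qed
    define a where "a = (\<lambda>i. SOME p. p \<in> P i)"
    have a: "a i \<in> P i" if "i \<in> C" for i
      unfolding a_def using ne[OF that] by (simp add: some_in_eq)
    have unit: "dist p p' = 1" if "i \<in> C" "j \<in> C" "i \<noteq> j" "p \<in> P i" "p' \<in> P j" for i j p p'
    proof -
      have "{i,j} \<in> E" using C(3) that unfolding cliq_def by blast
      then show ?thesis using comp C(1) that unfolding compatible_def by blast
    qed
    have dimi: "lam i + 1 \<le> dim ((+) (- a i) ` P i)" if "i \<in> C" for i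
    proof -
      from other[OF that] obtain j where j: "j \<in> C" "j \<noteq> i" by blast
      obtain p' where p': "p' \<in> P j" using ne[OF j(1)] by blast
      have "\<forall>p\<in>P i. dist p p' = 1" using unit[OF that j(1) j(2)[symmetric] _ p'] by blast
      then have "profile_entry (P i) + 1 \<le> dim ((+) (- a i) ` P i)"
        using sphere_dim[of "P i" "a i" p'] fin C(1) that c3 a by auto
      then show ?thesis using fin C(1) that by auto
    qed
    have orth: "inner u w = 0" if ij: "i \<in> C" "j \<in> C" "i \<noteq> j" and uw: "u \<in> (+) (- a i) ` P i" "w \<in> (+) (- a j) ` P j" for i j u w
    proof -
      obtain p where p: "p \<in> P i" "u = - a i + p" using uw(1) by blast
      obtain p' where p': "p' \<in> P j" "w = - a j + p'" using uw(2) by blast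
      have "2 * inner (p - a i) (p' - a j) = (norm (p - a j))^2 + (norm (a i - p'))^2 - (norm (p - p'))^2 - (norm (a i - a j))^2"
        by (rule polar)
      moreover have "norm (p - a j) = 1" using unit[OF ij p(1) a[OF ij(2)]] by (simp add: dist_norm)
      moreover have "norm (a i - p') = 1" using unit[OF ij a[OF ij(1)] p'(1)] by (simp add: dist_norm)
      moreover have "norm (p - p') = 1" using unit[OF ij p(1) p'(1)] by (simp add: dist_norm)
      moreover have "norm (a i - a j) = 1" using unit[OF ij a[OF ij(1)] a[OF ij(2)]] by (simp add: dist_norm)
      ultimately have "inner (p - a i) (p' - a j) = 0" by simp
      moreover have "u = p - a i" "w = p' - a j" using p(2) p'(2) by auto
      ultimately show ?thesis by simp
    qed
    have "(\<Sum>i\<in>C. lam i + 1) \<le> (\<Sum>i\<in>C. dim ((+) (- a i) ` P i))"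
      using dimi by (intro sum_mono) auto
    also have "\<dots> \<le> DIM('a)" using clique_dim[OF finC, of a P] orth by blast
    finally have "(\<Sum>i\<in>C. lam i + 1) \<le> DIM('a)" .
    then have "real (\<Sum>i\<in>C. lam i + 1) \<le> real DIM('a)" by linarith
    moreover have "real (\<Sum>i\<in>C. lam i + 1) = (\<Sum>i\<in>C. real (lam i) + 1)" by (simp add: add.commute)
    ultimately show ?thesis by linarith
  qed
qed


lemma sum_J_split:
  fixes f :: "nat \<Rightarrow> real"
  shows "(\<Sum>j\<in>{0..2*k}. f j) = f 0 + (\<Sum>j\<in>{1..k}. f j) + (\<Sum>i\<in>{1..k}. f (i + k))"
proof -
  have e: "{0..2*k} = insert 0 ({1..k} \<union> {1+k..k+k})" by auto
  have "(\<Sum>j\<in>{0..2*k}. f j) = f 0 + (\<Sum>j\<in>{1..k} \<union> {1+k..k+k}. f j)"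
    unfolding e by (subst sum.insert) auto
  also have "(\<Sum>j\<in>{1..k} \<union> {1+k..k+k}. f j) = (\<Sum>j\<in>{1..k}. f j) + (\<Sum>j\<in>{1+k..k+k}. f j)"
    by (rule sum.union_disjoint) auto
  also have "(\<Sum>j\<in>{1+k..k+k}. f j) = (\<Sum>i\<in>{1..k}. f (i + k))"
    by (rule sum.shift_bounds_cl_nat_ivl)
  finally show ?thesis by simp
qed

lemma sum_I_split:
  fixes f :: "nat \<Rightarrow> real"
  shows "(\<Sum>i\<in>{0..k}. f i) = f 0 + (\<Sum>i\<in>{1..k}. f i)"
proof -
  have e: "{0..k} = insert 0 {1..k}" by auto
  show ?thesis unfolding e by (subst sum.insert) auto
qed

lemma sum_pattern:
  fixes f :: "nat \<Rightarrow> real"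
  assumes "i \<in> K" "N \<subseteq> K" "i \<notin> N" "finite K"
  shows "(\<Sum>x\<in>K. f x * (if x = i then L else if x \<in> N then 1 else 0)) = L * f i + (\<Sum>x\<in>N. f x)"
proof -
  have "(\<Sum>x\<in>K. f x * (if x = i then L else if x \<in> N then 1 else 0))
      = (\<Sum>x\<in>K. (if x = i then L * f x else 0) + (if x \<in> N then f x else 0))"
    using assms(3) by (intro sum.cong) auto
  also have "\<dots> = (\<Sum>x\<in>K. (if x = i then L * f x else 0)) + (\<Sum>x\<in>K. (if x \<in> N then f x else 0))"
    by (rule sum.distrib)
  also have "(\<Sum>x\<in>K. (if x = i then L * f x else 0)) = L * f i"
    using assms(1,4) by (simp add: sum.delta)
  also have "(\<Sum>x\<in>K. (if x \<in> N then f x else 0)) = (\<Sum>x\<in>K \<inter> N. f x)"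
    using assms(4) by (simp add: sum.inter_restrict)
  also have "K \<inter> N = N" using assms(2) by blast
  finally show ?thesis by simp
qed

lemma nonnbrs_sym:
  assumes "i \<in> {1..k}" "j \<in> {1..k}"
  shows "j \<in> nonnbrs k E i \<longleftrightarrow> i \<in> nonnbrs k E j"
  using assms by (auto simp: nonnbrs_def insert_commute)

lemma nonnbrs_sub: "nonnbrs k E i \<subseteq> {1..k}" "i \<notin> nonnbrs k E i"
  by (auto simp: nonnbrs_def)

theorem theorem5p5:
  fixes k :: nat and E :: "nat set set" and lam :: "nat \<Rightarrow> nat"
  assumes "is_graph_on k E"
    and "realisable TYPE('a::euclidean_space) k E lam"
    and "\<forall>i\<in>{1..k}. lam i \<ge> 2"
  shows "zeta k E lam \<le> 5/8 * real DIM('a) + 1/8 * real k"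
proof -
  obtain P :: "nat \<Rightarrow> 'a set" where fin: "\<forall>i\<in>{1..k}. finite (P i) \<and> profile_entry (P i) = lam i"
    and comp: "compatible k E P"
    using assms(2) unfolding realisable_def by blast
  define d where "d = real DIM('a)"
  define B where "B = 5/8 * d + 1/8 * real k"
  have lam2: "\<forall>i\<in>{1..k}. lam i \<ge> 2" using assms(3) .
  have dualB: "(\<Sum>i\<in>{1..k}. w i) \<le> B"
    if w0: "\<forall>i\<in>{1..k}. w i \<ge> 0"
      and wc: "\<forall>j\<in>{1..k}. real (lam j) * w j + (\<Sum>i\<in>nonnbrs k E j. w i) \<le> real (lam j)" for w
  proof (cases "k = 0")
    case True
    then show ?thesis by (simp add: B_def d_def)
  next
    case False
    have "(\<Sum>i\<in>{1..k}. w i) \<le> (5 * d + real (card {1..k}))/8"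
    proof (rule dual_bound)
      show "finite {1..k}" by simp
      show "{1..k} \<noteq> {}" using False by simp
      show "\<forall>i\<in>{1..k}. lam i \<ge> 2" using lam2 .
      show "\<forall>i\<in>{1..k}. w i \<ge> 0" using w0 .
      show "\<forall>i\<in>{1..k}. real (lam i) * w i + (\<Sum>j\<in>{j\<in>{1..k}. j \<noteq> i \<and> {i,j} \<notin> E}. w j) \<le> real (lam i)"
        using wc unfolding nonnbrs_def by blast
      show "\<forall>C. C \<subseteq> {1..k} \<longrightarrow> C \<noteq> {} \<longrightarrow> cliq E C \<longrightarrow> (\<Sum>i\<in>C. real (lam i) + 1) \<le> d + 1"
        using clique_weight[OF comp fin lam2] unfolding d_def by blast
    qed
    then show ?thesis by (simp add: B_def)
  qed
  define M where "M = (\<lambda>i j. if j = i then real (lam i) else if j \<in> nonnbrs k E i then 1 else (0::real))"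
  define g where "g = (\<lambda>j i. if j = 0 then (if i = 0 then 1 else 0) else if j \<le> k then (if i = 0 then real (lam j) else M i j) else (if i = j - k then -1 else (0::real)))"
  define b where "b = (\<lambda>i::nat. if i = 0 then B else (1::real))"
  have Msum: "(\<Sum>j\<in>{1..k}. c j * M i j) = real (lam i) * c i + (\<Sum>j\<in>nonnbrs k E i. c j)"
    if "i \<in> {1..k}" for c i
    unfolding M_def using sum_pattern[of i "{1..k}" "nonnbrs k E i" c "real (lam i)"] that nonnbrs_sub
    by simp
  have Msum2: "(\<Sum>i\<in>{1..k}. u i * M i j) = real (lam j) * u j + (\<Sum>i\<in>nonnbrs k E j. u i)"
    if j: "j \<in> {1..k}" for u j
  proof -
    have "(\<Sum>i\<in>{1..k}. u i * M i j) = (\<Sum>i\<in>{1..k}. u i * (if i = j then real (lam j) else if i \<in> nonnbrs k E j then 1 else 0))"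
    proof (intro sum.cong refl)
      fix i assume i: "i \<in> {1..k}"
      show "u i * M i j = u i * (if i = j then real (lam j) else if i \<in> nonnbrs k E j then 1 else 0)"
        unfolding M_def using nonnbrs_sym[OF i j, of E] by auto
    qed
    also have "\<dots> = real (lam j) * u j + (\<Sum>i\<in>nonnbrs k E j. u i)"
      using sum_pattern[of j "{1..k}" "nonnbrs k E j" u "real (lam j)"] j nonnbrs_sub by simp
    finally show ?thesis .
  qed
  have dot: "dotI {0..k} y v = y 0 * v 0 + (\<Sum>i\<in>{1..k}. y i * v i)" for y v
    unfolding dotI_def by (rule sum_I_split)
  have incone: "in_cone {0..k} {0..2*k} g b"
  proof (rule ccontr)
    assume nc: "\<not> in_cone {0..k} {0..2*k} g b"
    have fa: "\<forall>g b. \<not> in_cone {0..k} {0..2*k} g b \<longrightarrow> (\<exists>y. (\<forall>j\<in>{0..2*k}. dotI {0..k} y (g j) \<ge> 0) \<and> dotI {0..k} y b < 0)"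
      by (rule farkas_aux) auto
    have "\<exists>y. (\<forall>j\<in>{0..2*k}. dotI {0..k} y (g j) \<ge> 0) \<and> dotI {0..k} y b < 0"
      using fa nc by blast
    then obtain y where y1: "\<forall>j\<in>{0..2*k}. dotI {0..k} y (g j) \<ge> 0" and y2: "dotI {0..k} y b < 0"
      by blast
    have mu: "y 0 \<ge> 0"
    proof -
      have "dotI {0..k} y (g 0) = y 0" unfolding dot by (simp add: g_def)
      moreover have "(0::nat) \<in> {0..2*k}" by simp
      ultimately show ?thesis using y1 by metis
    qed
    have yneg: "y i \<le> 0" if i: "i \<in> {1..k}" for i
    proof -
      have gi: "g (i + k) = (\<lambda>i'. if i' = i then -1 else 0)"
        using i by (auto simp: g_def fun_eq_iff)
      have "dotI {0..k} y (g (i + k)) = y 0 * (if 0 = i then -1 else 0) + (\<Sum>i'\<in>{1..k}. y i' * (if i' = i then -1 else 0))"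
        unfolding dot gi by simp
      also have "\<dots> = - y i" using i by (simp add: sum.delta if_distrib cong: if_cong)
      finally have "dotI {0..k} y (g (i + k)) = - y i" .
      moreover have "i + k \<in> {0..2*k}" using i by auto
      ultimately have "- y i \<ge> 0" using y1 by metis
      then show ?thesis by simp
    qed
    define u where "u = (\<lambda>i. - y i)"
    have u0: "\<forall>i\<in>{1..k}. u i \<ge> 0" using yneg by (simp add: u_def)
    have ucol: "real (lam j) * u j + (\<Sum>i\<in>nonnbrs k E j. u i) \<le> y 0 * real (lam j)"
      if j: "j \<in> {1..k}" for j
    proof -
      have gj: "g j = (\<lambda>i. if i = 0 then real (lam j) else M i j)"
        using j by (auto simp: g_def fun_eq_iff)
      have "dotI {0..k} y (g j) = y 0 * real (lam j) + (\<Sum>i\<in>{1..k}. y i * M i j)"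
        unfolding dot gj by simp
      also have "(\<Sum>i\<in>{1..k}. y i * M i j) = - (\<Sum>i\<in>{1..k}. u i * M i j)"
        by (simp add: u_def sum_negf)
      also have "(\<Sum>i\<in>{1..k}. u i * M i j) = real (lam j) * u j + (\<Sum>i\<in>nonnbrs k E j. u i)"
        by (rule Msum2[OF j])
      finally have "dotI {0..k} y (g j) = y 0 * real (lam j) - (real (lam j) * u j + (\<Sum>i\<in>nonnbrs k E j. u i))"
        by simp
      moreover have "dotI {0..k} y (g j) \<ge> 0" using y1 j by auto
      ultimately show ?thesis by linarith
    qed
    have usum: "(\<Sum>i\<in>{1..k}. u i) > y 0 * B"
    proof -
      have "dotI {0..k} y b = y 0 * B + (\<Sum>i\<in>{1..k}. y i)"
        unfolding dot by (simp add: b_def)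
      also have "(\<Sum>i\<in>{1..k}. y i) = - (\<Sum>i\<in>{1..k}. u i)" by (simp add: u_def sum_negf)
      finally show ?thesis using y2 by linarith
    qed
    show False
    proof (cases "y 0 = 0")
      case True
      have "u j = 0" if j: "j \<in> {1..k}" for j
      proof -
        have "(\<Sum>i\<in>nonnbrs k E j. u i) \<ge> 0"
          using u0 nonnbrs_sub(1)[of k E j] by (intro sum_nonneg) auto
        moreover have "real (lam j) > 0" using lam2 j by fastforce
        moreover have "u j \<ge> 0" using u0 j by blast
        moreover have "y 0 * real (lam j) = 0" using True by simp
        ultimately have "real (lam j) * u j \<le> 0" using ucol[OF j] by linarith
        then show ?thesis using \<open>real (lam j) > 0\<close> \<open>u j \<ge> 0\<close>
          by (simp add: mult_le_0_iff)
      qed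
      then have "(\<Sum>i\<in>{1..k}. u i) = 0" by simp
      then show False using usum True by simp
    next
      case False
      then have mup: "y 0 > 0" using mu by simp
      define w where "w = (\<lambda>i. u i / y 0)"
      have "(\<Sum>i\<in>{1..k}. w i) \<le> B"
      proof (rule dualB)
        show "\<forall>i\<in>{1..k}. w i \<ge> 0" using u0 mup by (simp add: w_def)
        show "\<forall>j\<in>{1..k}. real (lam j) * w j + (\<Sum>i\<in>nonnbrs k E j. w i) \<le> real (lam j)"
        proof
          fix j assume j: "j \<in> {1..k}"
          have "real (lam j) * w j + (\<Sum>i\<in>nonnbrs k E j. w i) = (real (lam j) * u j + (\<Sum>i\<in>nonnbrs k E j. u i)) / y 0"
            by (simp add: w_def sum_divide_distrib add_divide_distrib)
          also have "\<dots> \<le> (y 0 * real (lam j)) / y 0"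
            using ucol[OF j] mup by (intro divide_right_mono) auto
          also have "\<dots> = real (lam j)" using mup by simp
          finally show "real (lam j) * w j + (\<Sum>i\<in>nonnbrs k E j. w i) \<le> real (lam j)" .
        qed
      qed
      moreover have "(\<Sum>i\<in>{1..k}. w i) = (\<Sum>i\<in>{1..k}. u i) / y 0"
        by (simp add: w_def sum_divide_distrib)
      ultimately have "(\<Sum>i\<in>{1..k}. u i) \<le> B * y 0"
        using mup by (simp add: divide_le_eq)
      then show False using usum by (simp add: algebra_simps)
    qed
  qed
  then obtain c where c0: "\<forall>j\<in>{0..2*k}. 0 \<le> c j"
    and cb: "\<forall>i\<in>{0..k}. b i = (\<Sum>j\<in>{0..2*k}. c j * g j i)"
    unfolding in_cone_def by blast
  have feas: "lp_feasible k E lam c"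
    unfolding lp_feasible_def
  proof
    fix i assume i: "i \<in> {1..k}"
    have "c i \<ge> 0" using c0 i by auto
    moreover have "real (lam i) * c i + (\<Sum>j\<in>nonnbrs k E i. c j) \<ge> 1"
    proof -
      have "i \<in> {0..k}" using i by auto
      then have "b i = (\<Sum>j\<in>{0..2*k}. c j * g j i)" using cb by blast
      moreover have "b i = 1" using i by (simp add: b_def)
      ultimately have "1 = (\<Sum>j\<in>{0..2*k}. c j * g j i)" by simp
      also have "\<dots> = c 0 * g 0 i + (\<Sum>j\<in>{1..k}. c j * g j i) + (\<Sum>i'\<in>{1..k}. c (i' + k) * g (i' + k) i)"
        by (rule sum_J_split)
      also have "c 0 * g 0 i = 0" using i by (simp add: g_def)
      also have "(\<Sum>j\<in>{1..k}. c j * g j i) = (\<Sum>j\<in>{1..k}. c j * M i j)"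
        using i by (intro sum.cong) (auto simp: g_def)
      also have "(\<Sum>i'\<in>{1..k}. c (i' + k) * g (i' + k) i) = (\<Sum>i'\<in>{1..k}. (if i' = i then - c (i + k) else 0))"
        using i by (intro sum.cong) (auto simp: g_def)
      also have "\<dots> = - c (i + k)" using i by (simp add: sum.delta)
      finally have "1 = (\<Sum>j\<in>{1..k}. c j * M i j) - c (i + k)" by simp
      moreover have "c (i + k) \<ge> 0" using c0 i by auto
      ultimately show ?thesis using Msum[OF i, of c] by linarith
    qed
    ultimately show "0 \<le> c i \<and> 1 \<le> real (lam i) * c i + (\<Sum>j\<in>nonnbrs k E i. c j)" by simp
  qed
  have obj: "(\<Sum>i\<in>{1..k}. real (lam i) * c i) \<le> B"
  proof -
    have "(0::nat) \<in> {0..k}" by simp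
    then have "b 0 = (\<Sum>j\<in>{0..2*k}. c j * g j 0)" using cb by blast
    then have "B = (\<Sum>j\<in>{0..2*k}. c j * g j 0)" by (simp add: b_def)
    also have "\<dots> = c 0 * g 0 0 + (\<Sum>j\<in>{1..k}. c j * g j 0) + (\<Sum>i'\<in>{1..k}. c (i' + k) * g (i' + k) 0)"
      by (rule sum_J_split)
    also have "c 0 * g 0 0 = c 0" by (simp add: g_def)
    also have "(\<Sum>j\<in>{1..k}. c j * g j 0) = (\<Sum>j\<in>{1..k}. real (lam j) * c j)"
      by (intro sum.cong) (auto simp: g_def)
    also have "(\<Sum>i'\<in>{1..k}. c (i' + k) * g (i' + k) 0) = 0"
      by (intro sum.neutral) (auto simp: g_def)
    finally have "B = c 0 + (\<Sum>j\<in>{1..k}. real (lam j) * c j)" by simp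
    moreover have "c 0 \<ge> 0" using c0 by auto
    ultimately show ?thesis by linarith
  qed
  have bdd: "bdd_below {\<Sum>i\<in>{1..k}. real (lam i) * x i | x. lp_feasible k E lam x}"
  proof (rule bdd_belowI)
    fix v assume "v \<in> {\<Sum>i\<in>{1..k}. real (lam i) * x i | x. lp_feasible k E lam x}"
    then obtain x where v: "v = (\<Sum>i\<in>{1..k}. real (lam i) * x i)" and x: "lp_feasible k E lam x" by blast
    have "\<forall>i\<in>{1..k}. x i \<ge> 0" using x unfolding lp_feasible_def by blast
    then show "0 \<le> v" unfolding v by (intro sum_nonneg) auto
  qed
  have "zeta k E lam \<le> (\<Sum>i\<in>{1..k}. real (lam i) * c i)"
    unfolding zeta_def using feas by (intro cInf_lower[OF _ bdd]) blast
  also have "\<dots> \<le> B" by (rule obj)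
  finally show ?thesis by (simp add: B_def d_def)
qed

end
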